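(* Let $0<\lambda<1$, identify $\mathbb R^2$ with $\mathbb C$, let $f_j(z)=1+\theta_jz$ with $\theta_j=\lambda e^{(-1)^j i\pi/3}$ for $j=1,2$, let $A$ be the unique nonempty compact set with $A=f_1(A)\cup f_2(A)$, and let $Y=\{(x,y)\colon x=0\}$. Then for $j=1,2$, \[\mathrm{dist}(Y,f_j(A))=\mathrm{dist}(Y,A)\ge 1+\frac\lambda2-\frac{\lambda^2(1+2\lambda)}{2(1-\lambda^2)},\] and \[\mathrm{dist}(f_1(A),f_2(A))\ge\sqrt3\,\lambda-\sqrt3\,\frac{\lambda^3}{1-\lambda}.\]
   Context: For sets $S_1,S_2\subset\mathbb R^2$, $\mathrm{dist}(S_1,S_2)=\inf\{|x-y|\colon x\in S_1,y\in S_2\}$. *)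

theory Defs
  imports "HOL-Analysis.Analysis"
begin

definition theta :: "real \<Rightarrow> nat \<Rightarrow> complex" where
  "theta lam j = complex_of_real lam * exp ((-1) ^ j * \<i> * complex_of_real (pi / 3))"

definition fmap :: "real \<Rightarrow> nat \<Rightarrow> complex \<Rightarrow> complex" where
  "fmap lam j z = 1 + theta lam j * z"

definition Yline :: "complex set" where
  "Yline = {z. Re z = 0}"

end

theory Submission
  imports Defs
begin

lemma theta1: "theta lam 1 = Complex (lam/2) (- lam * sqrt 3 / 2)"
proof -
  have "exp ((-1) ^ 1 * \<i> * complex_of_real (pi / 3)) = cis (- (pi/3))"
    by (simp add: cis_conv_exp)
  also have "\<dots> = Complex (1/2) (- sqrt 3 / 2)"
    by (simp add: cis.ctr cos_60 sin_60)
  finally have e: "exp ((-1) ^ 1 * \<i> * complex_of_real (pi / 3)) = Complex (1/2) (- sqrt 3 / 2)" .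
  show ?thesis unfolding theta_def e by (simp add: complex_eq_iff)
qed

lemma theta2: "theta lam 2 = Complex (lam/2) (lam * sqrt 3 / 2)"
proof -
  have "exp ((-1) ^ 2 * \<i> * complex_of_real (pi / 3)) = cis (pi/3)"
    by (simp add: cis_conv_exp)
  also have "\<dots> = Complex (1/2) (sqrt 3 / 2)"
    by (simp add: cis.ctr cos_60 sin_60)
  finally have e: "exp ((-1) ^ 2 * \<i> * complex_of_real (pi / 3)) = Complex (1/2) (sqrt 3 / 2)" .
  show ?thesis unfolding theta_def e by (simp add: complex_eq_iff)
qed

lemma norm_theta:
  assumes "0 \<le> lam" "j \<in> {1,2::nat}"
  shows "norm (theta lam j) = lam"
proof -
  have "norm (exp ((-1) ^ j * \<i> * complex_of_real (pi / 3))) = 1"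
    using assms(2) by (auto simp: norm_exp_i_times)
  then show ?thesis using assms(1) unfolding theta_def by (simp add: norm_mult)
qed

lemma dist_fmap:
  assumes "0 \<le> lam" "j \<in> {1,2::nat}"
  shows "dist (fmap lam j z) (fmap lam j w) = lam * dist z w"
proof -
  have "fmap lam j z - fmap lam j w = theta lam j * (z - w)"
    unfolding fmap_def by (simp add: algebra_simps)
  then show ?thesis using norm_theta[OF assms]
    by (simp add: dist_norm norm_mult)
qed

lemma key:
  fixes A S :: "complex set"
  assumes lam: "0 < lam" "lam < 1"
    and S: "closed S" "S \<noteq> {}" "\<And>j z. j \<in> {1,2::nat} \<Longrightarrow> z \<in> S \<Longrightarrow> fmap lam j z \<in> S"
    and A: "compact A" "A \<subseteq> fmap lam 1 ` A \<union> fmap lam 2 ` A"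
  shows "A \<subseteq> S"
proof (cases "A = {}")
  case True then show ?thesis by simp
next
  case False
  have "continuous_on A (\<lambda>a. infdist a S)" by (intro continuous_intros)
  then obtain a0 where a0: "a0 \<in> A" "\<And>a. a \<in> A \<Longrightarrow> infdist a S \<le> infdist a0 S"
    using continuous_attains_sup[OF A(1) False] by blast
  obtain j a1 where j: "j \<in> {1,2::nat}" and a1: "a1 \<in> A" and eq: "a0 = fmap lam j a1"
    using A(2) a0(1) by blast
  obtain s where s: "s \<in> S" "infdist a1 S = dist a1 s"
    using infdist_attains_inf[OF S(1) S(2)] by blast
  have "infdist a0 S \<le> dist a0 (fmap lam j s)"
    by (rule infdist_le) (use S(3)[OF j s(1)] in auto)
  also have "\<dots> = lam * infdist a1 S"
    using dist_fmap[of lam j a1 s] lam j eq s(2) by simp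
  also have "\<dots> \<le> lam * infdist a0 S"
    using a0(2)[OF a1] lam by (simp add: mult_left_mono)
  finally have "infdist a0 S \<le> 0"
    using lam infdist_nonneg[of a0 S]
    by (metis le_less_trans less_le_not_le mult_le_cancel_right1 not_le)
  then have "\<And>a. a \<in> A \<Longrightarrow> infdist a S = 0"
    using a0(2) infdist_nonneg by (metis order.antisym)
  then show ?thesis using in_closed_iff_infdist_zero[OF S(1) S(2)] by blast
qed

lemma cnj_fmap1: "cnj (fmap lam 1 z) = fmap lam 2 (cnj z)"
  unfolding fmap_def theta1 theta2 by (simp add: complex_eq_iff)

lemma cnj_fmap2: "cnj (fmap lam 2 z) = fmap lam 1 (cnj z)"
  unfolding fmap_def theta1 theta2 by (simp add: complex_eq_iff)

lemma cnj_sym: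
  fixes A :: "complex set"
  assumes lam: "0 < lam" "lam < 1"
    and A: "compact A" "A \<noteq> {}" "A = fmap lam 1 ` A \<union> fmap lam 2 ` A"
    and a: "a \<in> A"
  shows "cnj a \<in> A"
proof -
  have "A \<subseteq> cnj ` A"
  proof (rule key[OF lam])
    show "closed (cnj ` A)"
      by (intro compact_imp_closed compact_continuous_image A(1) continuous_intros)
    show "cnj ` A \<noteq> {}" using A(2) by simp
    show "fmap lam j z \<in> cnj ` A" if jj: "j \<in> {1,2}" and zz: "z \<in> cnj ` A" for j z
    proof -
      obtain w where w: "w \<in> A" "z = cnj w" using zz by blast
      show ?thesis
      proof (cases "j = 1")
        case True
        have "fmap lam 1 z = cnj (fmap lam 2 w)" using w(2) cnj_fmap2[of lam w] by simp
        moreover have "fmap lam 2 w \<in> A" using w(1) A(3) by blast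
        ultimately show ?thesis using True by blast
      next
        case False
        then have "j = 2" using jj by simp
        have "fmap lam 2 z = cnj (fmap lam 1 w)" using w(2) cnj_fmap1[of lam w] by simp
        moreover have "fmap lam 1 w \<in> A" using w(1) A(3) by blast
        ultimately show ?thesis using \<open>j = 2\<close> by blast
      qed
    qed
  qed (use A in auto)
  then obtain b where "b \<in> A" "a = cnj b" using a by blast
  then show ?thesis by simp
qed




definition "iD lam = 1/(1-lam^2)"
definition "iE lam = 1/(1-(lam::real))"

lemma iDf: assumes "0 < lam" "lam < (1::real)" shows "(1-lam^2)*iD lam = 1" "0 < iD lam"
proof -
  have sq: "lam^2 < 1" using power_strict_mono[of lam 1 2] assms by simp
  then show "(1-lam^2)*iD lam = 1" "0 < iD lam" by (auto simp: iD_def)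
qed

lemma iEf: assumes "0 < lam" "lam < (1::real)" shows "(1-lam)*iE lam = 1" "0 < iE lam"
  using assms by (auto simp: iE_def)

definition "hh0 lam = (1 + lam/2)*iD lam"
definition "HH1 lam = (1+2*lam)*iD lam"
definition "HH2 lam = (-1+lam+3*lam^2)*iD lam"
definition "hh3 lam = -(1 + lam / 2 - lam^2 * (1 + 2 * lam) * iD lam / 2)"
definition "GG0 lam = sqrt 3 * iE lam"
definition "gg1 lam = sqrt 3 * lam * iE lam / 2"
definition "GG2 lam = sqrt 3 * (-1+lam+lam^2) * iE lam"

lemmas cdefs = hh0_def HH1_def HH2_def hh3_def GG0_def gg1_def GG2_def

definition "inS lam x y \<longleftrightarrow> x \<le> hh0 lam \<and> x + sqrt 3*y \<le> HH1 lam \<and> -x + sqrt 3*y \<le> HH2 lam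
   \<and> -x \<le> hh3 lam \<and> -x - sqrt 3*y \<le> HH2 lam \<and> x - sqrt 3*y \<le> HH1 lam"
definition "inT lam x y \<longleftrightarrow> sqrt 3*x + y \<le> GG0 lam \<and> y \<le> gg1 lam \<and> -sqrt 3*x + y \<le> GG2 lam
   \<and> -sqrt 3*x - y \<le> GG2 lam \<and> -y \<le> gg1 lam \<and> sqrt 3*x - y \<le> GG0 lam"

lemma step: "0 \<le> (a::real) \<Longrightarrow> L \<le> b \<Longrightarrow> c + a*b \<le> h \<Longrightarrow> E = c + a*L \<Longrightarrow> E \<le> h"
  using mult_left_mono[of L b a] by linarith

lemma C0: assumes "0 < lam" "lam < (1::real)" shows "1 + (lam/2)*HH1 lam \<le> hh0 lam"
proof -
  have "hh0 lam - (1 + (lam/2)*HH1 lam) = 0"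
    using iDf(1)[OF assms] unfolding cdefs by (simp add: field_simps; algebra)
  moreover have "0 \<le> (0::real)" using assms by simp
  ultimately show ?thesis by linarith
qed

lemma C1: assumes "0 < lam" "lam < (1::real)" shows "1 + (lam)*HH2 lam \<le> HH1 lam"
proof -
  have "HH1 lam - (1 + (lam)*HH2 lam) = 3*lam"
    using iDf(1)[OF assms] unfolding cdefs by (simp add: field_simps; algebra)
  moreover have "0 \<le> (3*lam::real)" using assms by simp
  ultimately show ?thesis by linarith
qed

lemma C2: assumes "0 < lam" "lam < (1::real)" shows "-1 + (2*lam)*hh3 lam \<le> HH2 lam"
proof -
  have "HH2 lam - (-1 + (2*lam)*hh3 lam) = 3*lam*(1+lam)"
    using iDf(1)[OF assms] unfolding cdefs by (simp add: field_simps; algebra)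
  moreover have "0 \<le> (3*lam*(1+lam)::real)" using assms by simp
  ultimately show ?thesis by linarith
qed

lemma C3: assumes "0 < lam" "lam < (1::real)" shows "-1 + (lam/2)*HH2 lam \<le> hh3 lam"
proof -
  have "hh3 lam - (-1 + (lam/2)*HH2 lam) = 0"
    using iDf(1)[OF assms] unfolding cdefs by (simp add: field_simps; algebra)
  moreover have "0 \<le> (0::real)" using assms by simp
  ultimately show ?thesis by linarith
qed

lemma C4: assumes "0 < lam" "lam < (1::real)" shows "-1 + (lam)*HH1 lam \<le> HH2 lam"
proof -
  have "HH2 lam - (-1 + (lam)*HH1 lam) = 0"
    using iDf(1)[OF assms] unfolding cdefs by (simp add: field_simps; algebra)
  moreover have "0 \<le> (0::real)" using assms by simp
  ultimately show ?thesis by linarith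
qed

lemma C5: assumes "0 < lam" "lam < (1::real)" shows "1 + (2*lam)*hh0 lam \<le> HH1 lam"
proof -
  have "HH1 lam - (1 + (2*lam)*hh0 lam) = 0"
    using iDf(1)[OF assms] unfolding cdefs by (simp add: field_simps; algebra)
  moreover have "0 \<le> (0::real)" using assms by simp
  ultimately show ?thesis by linarith
qed

lemma E0: assumes "0 < lam" "lam < (1::real)" shows "sqrt 3 + (2*lam)*gg1 lam \<le> GG0 lam"
proof -
  have "GG0 lam - (sqrt 3 + (2*lam)*gg1 lam) = sqrt 3*lam"
    using iEf(1)[OF assms] unfolding cdefs by (simp add: field_simps; algebra)
  moreover have "0 \<le> (sqrt 3*lam::real)" using assms by simp
  ultimately show ?thesis by linarith
qed

lemma E1: assumes "0 < lam" "lam < (1::real)" shows "0 + (lam/2)*GG2 lam \<le> gg1 lam"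
proof -
  have "gg1 lam - (0 + (lam/2)*GG2 lam) = sqrt 3*lam*(2+lam)/2"
    using iEf(1)[OF assms] unfolding cdefs by (simp add: field_simps; algebra)
  moreover have "0 \<le> (sqrt 3*lam*(2+lam)/2::real)" using assms by simp
  ultimately show ?thesis by linarith
qed

lemma E2: assumes "0 < lam" "lam < (1::real)" shows "-sqrt 3 + (lam)*GG2 lam \<le> GG2 lam"
proof -
  have "GG2 lam - (-sqrt 3 + (lam)*GG2 lam) = sqrt 3*(lam+lam^2)"
    using iEf(1)[OF assms] unfolding cdefs by (simp add: field_simps; algebra)
  moreover have "0 \<le> (sqrt 3*(lam+lam^2)::real)" using assms by simp
  ultimately show ?thesis by linarith
qed

lemma E3: assumes "0 < lam" "lam < (1::real)" shows "-sqrt 3 + (2*lam)*gg1 lam \<le> GG2 lam"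
proof -
  have "GG2 lam - (-sqrt 3 + (2*lam)*gg1 lam) = 0"
    using iEf(1)[OF assms] unfolding cdefs by (simp add: field_simps; algebra)
  moreover have "0 \<le> (0::real)" using assms by simp
  ultimately show ?thesis by linarith
qed

lemma E4: assumes "0 < lam" "lam < (1::real)" shows "0 + (lam/2)*GG0 lam \<le> gg1 lam"
proof -
  have "gg1 lam - (0 + (lam/2)*GG0 lam) = 0"
    using iEf(1)[OF assms] unfolding cdefs by (simp add: field_simps; algebra)
  moreover have "0 \<le> (0::real)" using assms by simp
  ultimately show ?thesis by linarith
qed

lemma E5: assumes "0 < lam" "lam < (1::real)" shows "sqrt 3 + (lam)*GG0 lam \<le> GG0 lam"
proof -
  have "GG0 lam - (sqrt 3 + (lam)*GG0 lam) = 0"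
    using iEf(1)[OF assms] unfolding cdefs by (simp add: field_simps; algebra)
  moreover have "0 \<le> (0::real)" using assms by simp
  ultimately show ?thesis by linarith
qed

lemma S_inv1: assumes lam: "0 < lam" "lam < (1::real)" and P: "inS lam x y"
  shows "inS lam (1 + lam/2*x + lam * sqrt 3/2*y) (lam/2*y - lam * sqrt 3/2*x)"
proof -

  have L0: "(1 + lam/2*x + lam * sqrt 3/2*y) \<le> hh0 lam"
    apply (rule step[where a="lam/2" and L="x + sqrt 3*y" and b="HH1 lam" and c="1"])
    subgoal using lam by simp
    subgoal using P by (simp add: inS_def)
    subgoal by (rule C0[OF lam])
    subgoal by (simp add: field_simps)
    done

  have L1: "(1 + lam/2*x + lam * sqrt 3/2*y) + sqrt 3*(lam/2*y - lam * sqrt 3/2*x) \<le> HH1 lam"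
    apply (rule step[where a="lam" and L="-x + sqrt 3*y" and b="HH2 lam" and c="1"])
    subgoal using lam by simp
    subgoal using P by (simp add: inS_def)
    subgoal by (rule C1[OF lam])
    subgoal by (simp add: field_simps)
    done

  have L2: "-(1 + lam/2*x + lam * sqrt 3/2*y) + sqrt 3*(lam/2*y - lam * sqrt 3/2*x) \<le> HH2 lam"
    apply (rule step[where a="2*lam" and L="-x" and b="hh3 lam" and c="-1"])
    subgoal using lam by simp
    subgoal using P by (simp add: inS_def)
    subgoal by (rule C2[OF lam])
    subgoal by (simp add: field_simps)
    done

  have L3: "-(1 + lam/2*x + lam * sqrt 3/2*y) \<le> hh3 lam"
    apply (rule step[where a="lam/2" and L="-x - sqrt 3*y" and b="HH2 lam" and c="-1"])
    subgoal using lam by simp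
    subgoal using P by (simp add: inS_def)
    subgoal by (rule C3[OF lam])
    subgoal by (simp add: field_simps)
    done

  have L4: "-(1 + lam/2*x + lam * sqrt 3/2*y) - sqrt 3*(lam/2*y - lam * sqrt 3/2*x) \<le> HH2 lam"
    apply (rule step[where a="lam" and L="x - sqrt 3*y" and b="HH1 lam" and c="-1"])
    subgoal using lam by simp
    subgoal using P by (simp add: inS_def)
    subgoal by (rule C4[OF lam])
    subgoal by (simp add: field_simps)
    done

  have L5: "(1 + lam/2*x + lam * sqrt 3/2*y) - sqrt 3*(lam/2*y - lam * sqrt 3/2*x) \<le> HH1 lam"
    apply (rule step[where a="2*lam" and L="x" and b="hh0 lam" and c="1"])
    subgoal using lam by simp
    subgoal using P by (simp add: inS_def)
    subgoal by (rule C5[OF lam])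
    subgoal by (simp add: field_simps)
    done

  show ?thesis unfolding inS_def using L0 L1 L2 L3 L4 L5 by linarith
qed

lemma S_inv2: assumes lam: "0 < lam" "lam < (1::real)" and P: "inS lam x y"
  shows "inS lam (1 + lam/2*x - lam * sqrt 3/2*y) (lam/2*y + lam * sqrt 3/2*x)"
proof -

  have L0: "(1 + lam/2*x - lam * sqrt 3/2*y) \<le> hh0 lam"
    apply (rule step[where a="lam/2" and L="x - sqrt 3*y" and b="HH1 lam" and c="1"])
    subgoal using lam by simp
    subgoal using P by (simp add: inS_def)
    subgoal by (rule C0[OF lam])
    subgoal by (simp add: field_simps)
    done

  have L1: "(1 + lam/2*x - lam * sqrt 3/2*y) + sqrt 3*(lam/2*y + lam * sqrt 3/2*x) \<le> HH1 lam"
    apply (rule step[where a="2*lam" and L="x" and b="hh0 lam" and c="1"])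
    subgoal using lam by simp
    subgoal using P by (simp add: inS_def)
    subgoal by (rule C5[OF lam])
    subgoal by (simp add: field_simps)
    done

  have L2: "-(1 + lam/2*x - lam * sqrt 3/2*y) + sqrt 3*(lam/2*y + lam * sqrt 3/2*x) \<le> HH2 lam"
    apply (rule step[where a="lam" and L="x + sqrt 3*y" and b="HH1 lam" and c="-1"])
    subgoal using lam by simp
    subgoal using P by (simp add: inS_def)
    subgoal by (rule C4[OF lam])
    subgoal by (simp add: field_simps)
    done

  have L3: "-(1 + lam/2*x - lam * sqrt 3/2*y) \<le> hh3 lam"
    apply (rule step[where a="lam/2" and L="-x + sqrt 3*y" and b="HH2 lam" and c="-1"])
    subgoal using lam by simp
    subgoal using P by (simp add: inS_def)
    subgoal by (rule C3[OF lam])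
    subgoal by (simp add: field_simps)
    done

  have L4: "-(1 + lam/2*x - lam * sqrt 3/2*y) - sqrt 3*(lam/2*y + lam * sqrt 3/2*x) \<le> HH2 lam"
    apply (rule step[where a="2*lam" and L="-x" and b="hh3 lam" and c="-1"])
    subgoal using lam by simp
    subgoal using P by (simp add: inS_def)
    subgoal by (rule C2[OF lam])
    subgoal by (simp add: field_simps)
    done

  have L5: "(1 + lam/2*x - lam * sqrt 3/2*y) - sqrt 3*(lam/2*y + lam * sqrt 3/2*x) \<le> HH1 lam"
    apply (rule step[where a="lam" and L="-x - sqrt 3*y" and b="HH2 lam" and c="1"])
    subgoal using lam by simp
    subgoal using P by (simp add: inS_def)
    subgoal by (rule C1[OF lam])
    subgoal by (simp add: field_simps)
    done

  show ?thesis unfolding inS_def using L0 L1 L2 L3 L4 L5 by linarith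
qed

lemma T_inv1: assumes lam: "0 < lam" "lam < (1::real)" and P: "inT lam x y"
  shows "inT lam (1 + lam/2*x + lam * sqrt 3/2*y) (lam/2*y - lam * sqrt 3/2*x)"
proof -

  have M0: "sqrt 3*(1 + lam/2*x + lam * sqrt 3/2*y) + (lam/2*y - lam * sqrt 3/2*x) \<le> GG0 lam"
    apply (rule step[where a="2*lam" and L="y" and b="gg1 lam" and c="sqrt 3"])
    subgoal using lam by simp
    subgoal using P by (simp add: inT_def)
    subgoal by (rule E0[OF lam])
    subgoal by (simp add: field_simps)
    done

  have M1: "(lam/2*y - lam * sqrt 3/2*x) \<le> gg1 lam"
    apply (rule step[where a="lam/2" and L="-sqrt 3*x + y" and b="GG2 lam" and c="0"])
    subgoal using lam by simp
    subgoal using P by (simp add: inT_def)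
    subgoal by (rule E1[OF lam])
    subgoal by (simp add: field_simps)
    done

  have M2: "-sqrt 3*(1 + lam/2*x + lam * sqrt 3/2*y) + (lam/2*y - lam * sqrt 3/2*x) \<le> GG2 lam"
    apply (rule step[where a="lam" and L="-sqrt 3*x - y" and b="GG2 lam" and c="-sqrt 3"])
    subgoal using lam by simp
    subgoal using P by (simp add: inT_def)
    subgoal by (rule E2[OF lam])
    subgoal by (simp add: field_simps)
    done

  have M3: "-sqrt 3*(1 + lam/2*x + lam * sqrt 3/2*y) - (lam/2*y - lam * sqrt 3/2*x) \<le> GG2 lam"
    apply (rule step[where a="2*lam" and L="-y" and b="gg1 lam" and c="-sqrt 3"])
    subgoal using lam by simp
    subgoal using P by (simp add: inT_def)
    subgoal by (rule E3[OF lam])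
    subgoal by (simp add: field_simps)
    done

  have M4: "-(lam/2*y - lam * sqrt 3/2*x) \<le> gg1 lam"
    apply (rule step[where a="lam/2" and L="sqrt 3*x - y" and b="GG0 lam" and c="0"])
    subgoal using lam by simp
    subgoal using P by (simp add: inT_def)
    subgoal by (rule E4[OF lam])
    subgoal by (simp add: field_simps)
    done

  have M5: "sqrt 3*(1 + lam/2*x + lam * sqrt 3/2*y) - (lam/2*y - lam * sqrt 3/2*x) \<le> GG0 lam"
    apply (rule step[where a="lam" and L="sqrt 3*x + y" and b="GG0 lam" and c="sqrt 3"])
    subgoal using lam by simp
    subgoal using P by (simp add: inT_def)
    subgoal by (rule E5[OF lam])
    subgoal by (simp add: field_simps)
    done

  show ?thesis unfolding inT_def using M0 M1 M2 M3 M4 M5 by linarith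
qed

lemma T_inv2: assumes lam: "0 < lam" "lam < (1::real)" and P: "inT lam x y"
  shows "inT lam (1 + lam/2*x - lam * sqrt 3/2*y) (lam/2*y + lam * sqrt 3/2*x)"
proof -

  have M0: "sqrt 3*(1 + lam/2*x - lam * sqrt 3/2*y) + (lam/2*y + lam * sqrt 3/2*x) \<le> GG0 lam"
    apply (rule step[where a="lam" and L="sqrt 3*x - y" and b="GG0 lam" and c="sqrt 3"])
    subgoal using lam by simp
    subgoal using P by (simp add: inT_def)
    subgoal by (rule E5[OF lam])
    subgoal by (simp add: field_simps)
    done

  have M1: "(lam/2*y + lam * sqrt 3/2*x) \<le> gg1 lam"
    apply (rule step[where a="lam/2" and L="sqrt 3*x + y" and b="GG0 lam" and c="0"])
    subgoal using lam by simp
    subgoal using P by (simp add: inT_def)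
    subgoal by (rule E4[OF lam])
    subgoal by (simp add: field_simps)
    done

  have M2: "-sqrt 3*(1 + lam/2*x - lam * sqrt 3/2*y) + (lam/2*y + lam * sqrt 3/2*x) \<le> GG2 lam"
    apply (rule step[where a="2*lam" and L="y" and b="gg1 lam" and c="-sqrt 3"])
    subgoal using lam by simp
    subgoal using P by (simp add: inT_def)
    subgoal by (rule E3[OF lam])
    subgoal by (simp add: field_simps)
    done

  have M3: "-sqrt 3*(1 + lam/2*x - lam * sqrt 3/2*y) - (lam/2*y + lam * sqrt 3/2*x) \<le> GG2 lam"
    apply (rule step[where a="lam" and L="-sqrt 3*x + y" and b="GG2 lam" and c="-sqrt 3"])
    subgoal using lam by simp
    subgoal using P by (simp add: inT_def)
    subgoal by (rule E2[OF lam])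
    subgoal by (simp add: field_simps)
    done

  have M4: "-(lam/2*y + lam * sqrt 3/2*x) \<le> gg1 lam"
    apply (rule step[where a="lam/2" and L="-sqrt 3*x - y" and b="GG2 lam" and c="0"])
    subgoal using lam by simp
    subgoal using P by (simp add: inT_def)
    subgoal by (rule E1[OF lam])
    subgoal by (simp add: field_simps)
    done

  have M5: "sqrt 3*(1 + lam/2*x - lam * sqrt 3/2*y) - (lam/2*y + lam * sqrt 3/2*x) \<le> GG0 lam"
    apply (rule step[where a="2*lam" and L="-y" and b="gg1 lam" and c="sqrt 3"])
    subgoal using lam by simp
    subgoal using P by (simp add: inT_def)
    subgoal by (rule E0[OF lam])
    subgoal by (simp add: field_simps)
    done

  show ?thesis unfolding inT_def using M0 M1 M2 M3 M4 M5 by linarith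
qed


lemma Re_f1: "Re (fmap lam 1 z) = 1 + lam/2*Re z + lam* sqrt 3/2*Im z"
  unfolding fmap_def theta1 by (simp add: algebra_simps)
lemma Im_f1: "Im (fmap lam 1 z) = lam/2*Im z - lam* sqrt 3/2*Re z"
  unfolding fmap_def theta1 by (simp add: algebra_simps)
lemma Re_f2: "Re (fmap lam 2 z) = 1 + lam/2*Re z - lam* sqrt 3/2*Im z"
  unfolding fmap_def theta2 by (simp add: algebra_simps)
lemma Im_f2: "Im (fmap lam 2 z) = lam/2*Im z + lam* sqrt 3/2*Re z"
  unfolding fmap_def theta2 by (simp add: algebra_simps)

lemma S_ne: assumes "0 < lam" "lam < (1::real)" shows "inS lam (hh0 lam) 0"
proof -
  note f = iDf[OF assms]
  have "HH1 lam - hh0 lam = (3*lam/2)*iD lam"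
    unfolding cdefs by (simp add: field_simps)
  moreover have "HH2 lam + hh0 lam = (3*lam/2+3*lam^2)*iD lam"
    unfolding cdefs by (simp add: field_simps)
  moreover have "hh3 lam + hh0 lam = (3*lam^2/2 + 3*lam^3/2)*iD lam"
    using f(1) unfolding cdefs by (simp add: field_simps; algebra)
  moreover have "0 \<le> (3*lam/2)*iD lam" "0 \<le> (3*lam/2+3*lam^2)*iD lam"
     "0 \<le> (3*lam^2/2 + 3*lam^3/2)*iD lam"
    using assms f(2) by (auto intro!: mult_nonneg_nonneg add_nonneg_nonneg)
  ultimately show ?thesis unfolding inS_def by simp
qed

lemma T_ne: assumes "0 < lam" "lam < (1::real)" shows "inT lam (iE lam) 0"
proof -
  note f = iEf[OF assms]
  have "GG2 lam + sqrt 3 * iE lam = sqrt 3*(lam+lam^2)*iE lam"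
    unfolding cdefs by (simp add: algebra_simps)
  moreover have "0 \<le> sqrt 3*(lam+lam^2)*iE lam" "0 \<le> gg1 lam"
    using assms f(2) unfolding cdefs by (auto intro!: mult_nonneg_nonneg add_nonneg_nonneg)
  ultimately show ?thesis unfolding inT_def by (simp add: GG0_def)
qed

lemma closed_S: "closed {z. inS lam (Re z) (Im z)}"
  unfolding inS_def
  by (intro closed_Collect_conj closed_Collect_le continuous_intros)

lemma closed_T: "closed {z. inT lam (Re z) (Im z)}"
  unfolding inT_def
  by (intro closed_Collect_conj closed_Collect_le continuous_intros)

lemma A_in_S:
  assumes lam: "0 < lam" "lam < 1"
    and A: "compact A" "A = fmap lam 1 ` A \<union> fmap lam 2 ` A"
  shows "A \<subseteq> {z. inS lam (Re z) (Im z)}"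
proof (rule key[OF lam closed_S])
  show "{z. inS lam (Re z) (Im z)} \<noteq> {}"
    using S_ne[OF lam] by (auto intro!: exI[of _ "Complex (hh0 lam) 0"])
  show "fmap lam j z \<in> {z. inS lam (Re z) (Im z)}" if j: "j \<in> {1,2}" and z: "z \<in> {z. inS lam (Re z) (Im z)}" for j z
  proof -
    have "j = 1 \<or> j = 2" using j by blast
    then show ?thesis
    proof
      assume "j = 1" then show ?thesis using S_inv1[OF lam, of "Re z" "Im z"] z
        by (simp only: Re_f1 Im_f1 mem_Collect_eq)
    next
      assume "j = 2" then show ?thesis using S_inv2[OF lam, of "Re z" "Im z"] z
        by (simp only: Re_f2 Im_f2 mem_Collect_eq)
    qed
  qed
qed (use A in auto)

lemma A_in_T:
  assumes lam: "0 < lam" "lam < 1"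
    and A: "compact A" "A = fmap lam 1 ` A \<union> fmap lam 2 ` A"
  shows "A \<subseteq> {z. inT lam (Re z) (Im z)}"
proof (rule key[OF lam closed_T])
  show "{z. inT lam (Re z) (Im z)} \<noteq> {}"
    using T_ne[OF lam] by (auto intro!: exI[of _ "Complex (iE lam) 0"])
  show "fmap lam j z \<in> {z. inT lam (Re z) (Im z)}" if j: "j \<in> {1,2}" and z: "z \<in> {z. inT lam (Re z) (Im z)}" for j z
  proof -
    have "j = 1 \<or> j = 2" using j by blast
    then show ?thesis
    proof
      assume "j = 1" then show ?thesis using T_inv1[OF lam, of "Re z" "Im z"] z
        by (simp only: Re_f1 Im_f1 mem_Collect_eq)
    next
      assume "j = 2" then show ?thesis using T_inv2[OF lam, of "Re z" "Im z"] z
        by (simp only: Re_f2 Im_f2 mem_Collect_eq)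
    qed
  qed
qed (use A in auto)

lemma sdY:
  assumes "x0 \<in> X" "\<And>x. x \<in> X \<Longrightarrow> \<bar>Re x0\<bar> \<le> \<bar>Re x\<bar>"
  shows "setdist Yline X = \<bar>Re x0\<bar>"
proof (rule antisym)
  have "Complex 0 (Im x0) \<in> Yline" by (simp add: Yline_def)
  then have "setdist Yline X \<le> dist (Complex 0 (Im x0)) x0"
    using setdist_le_dist assms(1) by blast
  also have "\<dots> = \<bar>Re x0\<bar>"
    by (simp add: dist_norm cmod_def)
  finally show "setdist Yline X \<le> \<bar>Re x0\<bar>" .
  show "\<bar>Re x0\<bar> \<le> setdist Yline X"
  proof (rule le_setdistI)
    show "Yline \<noteq> {}" by (auto simp: Yline_def intro!: exI[of _ 0])
    show "X \<noteq> {}" using assms(1) by blast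
    fix y x assume y: "y \<in> Yline" and x: "x \<in> X"
    have "\<bar>Re x0\<bar> \<le> \<bar>Re x\<bar>" using assms(2)[OF x] .
    also have "\<dots> = \<bar>Re (y - x)\<bar>" using y by (simp add: Yline_def)
    also have "\<dots> \<le> dist y x" using abs_Re_le_cmod[of "y - x"] by (simp add: dist_norm)
    finally show "\<bar>Re x0\<bar> \<le> dist y x" .
  qed
qed

theorem lemma3p4:
  fixes lam :: real and A :: "complex set"
  assumes "0 < lam" and "lam < 1"
    and "compact A" and "A \<noteq> {}"
    and "A = fmap lam 1 ` A \<union> fmap lam 2 ` A"
  shows "(\<forall>j\<in>{1,2::nat}. setdist Yline (fmap lam j ` A) = setdist Yline A)
       \<and> setdist Yline A \<ge> 1 + lam / 2 - lam^2 * (1 + 2 * lam) / (2 * (1 - lam^2))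
       \<and> setdist (fmap lam 1 ` A) (fmap lam 2 ` A) \<ge> sqrt 3 * lam - sqrt 3 * lam^3 / (1 - lam)"
proof -
  note lam = assms(1,2)
  have sym: "\<And>a. a \<in> A \<Longrightarrow> cnj a \<in> A" using cnj_sym[OF lam assms(3,4,5)] by blast
  have AS: "\<And>a. a \<in> A \<Longrightarrow> inS lam (Re a) (Im a)" using A_in_S[OF lam assms(3,5)] by blast
  have AT: "\<And>a. a \<in> A \<Longrightarrow> inT lam (Re a) (Im a)" using A_in_T[OF lam assms(3,5)] by blast
  have "continuous_on A (\<lambda>a. \<bar>Re a\<bar>)" by (intro continuous_intros)
  then obtain a0 where a0: "a0 \<in> A" "\<And>a. a \<in> A \<Longrightarrow> \<bar>Re a0\<bar> \<le> \<bar>Re a\<bar>"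
    using continuous_attains_inf[OF assms(3) assms(4)] by blast
  have sdA: "setdist Yline A = \<bar>Re a0\<bar>" by (rule sdY[OF a0])
  have P1: "setdist Yline (fmap lam j ` A) = setdist Yline A" if j: "j \<in> {1,2::nat}" for j
  proof -
    have sub: "fmap lam j ` A \<subseteq> A" using j assms(5) by blast
    have "\<exists>p \<in> fmap lam j ` A. \<bar>Re p\<bar> = \<bar>Re a0\<bar>"
    proof -
      have jj: "j = 1 \<or> j = 2" using j by blast
      have rc: "\<bar>Re (cnj a0)\<bar> = \<bar>Re a0\<bar>" by simp
      from a0(1) assms(5) have "a0 \<in> fmap lam 1 ` A \<or> a0 \<in> fmap lam 2 ` A" by blast
      then show ?thesis
      proof
        assume h1: "a0 \<in> fmap lam 1 ` A"
        then obtain b where b: "b \<in> A" "a0 = fmap lam 1 b" by blast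
        have c: "cnj a0 = fmap lam 2 (cnj b)" by (simp only: b(2) cnj_fmap1)
        have "cnj a0 \<in> fmap lam 2 ` A" unfolding c using sym[OF b(1)] by (rule imageI)
        from jj show ?thesis
        proof
          assume "j = 1" then show ?thesis using h1 by blast
        next
          assume "j = 2" then show ?thesis using \<open>cnj a0 \<in> fmap lam 2 ` A\<close> rc by blast
        qed
      next
        assume h2: "a0 \<in> fmap lam 2 ` A"
        then obtain b where b: "b \<in> A" "a0 = fmap lam 2 b" by blast
        have c: "cnj a0 = fmap lam 1 (cnj b)" by (simp only: b(2) cnj_fmap2)
        have "cnj a0 \<in> fmap lam 1 ` A" unfolding c using sym[OF b(1)] by (rule imageI)
        from jj show ?thesis
        proof
          assume "j = 2" then show ?thesis using h2 by blast
        next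
          assume "j = 1" then show ?thesis using \<open>cnj a0 \<in> fmap lam 1 ` A\<close> rc by blast
        qed
      qed
    qed
    then obtain p where p: "p \<in> fmap lam j ` A" "\<bar>Re p\<bar> = \<bar>Re a0\<bar>" by blast
    have "setdist Yline (fmap lam j ` A) = \<bar>Re p\<bar>"
      by (rule sdY) (use p sub a0(2) in auto)
    then show ?thesis using p(2) sdA by simp
  qed
  have P2: "setdist Yline A \<ge> 1 + lam / 2 - lam^2 * (1 + 2 * lam) / (2 * (1 - lam^2))"
  proof -
    have "- Re a0 \<le> hh3 lam" using AS[OF a0(1)] by (simp add: inS_def)
    have aux: "\<And>x D::real. x*(1/D)/2 = x/(2*D)"
      subgoal for x D by (cases "D = 0") (simp_all add: field_simps)
      done
    have "hh3 lam = - (1 + lam / 2 - lam^2 * (1 + 2 * lam) / (2 * (1 - lam^2)))"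
      unfolding hh3_def iD_def aux ..
    then have "1 + lam / 2 - lam^2 * (1 + 2 * lam) / (2 * (1 - lam^2)) \<le> Re a0"
      using \<open>- Re a0 \<le> hh3 lam\<close> by linarith
    then show ?thesis using sdA by simp
  qed
  have P3: "setdist (fmap lam 1 ` A) (fmap lam 2 ` A) \<ge> sqrt 3 * lam - sqrt 3 * lam^3 / (1 - lam)"
  proof (rule le_setdistI)
    show "fmap lam 1 ` A \<noteq> {}" "fmap lam 2 ` A \<noteq> {}" using assms(4) by auto
    fix x y assume x: "x \<in> fmap lam 1 ` A" and y: "y \<in> fmap lam 2 ` A"
    obtain b where b: "b \<in> A" "x = fmap lam 1 b" using x by blast
    obtain a where a: "a \<in> A" "y = fmap lam 2 a" using y by blast
    have hb: "-sqrt 3*Re b + Im b \<le> GG2 lam" using AT[OF b(1)] by (simp add: inT_def)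
    have ha: "-sqrt 3*Re a - Im a \<le> GG2 lam" using AT[OF a(1)] by (simp add: inT_def)
    have "Im x = (lam/2) * (-sqrt 3*Re b + Im b)" unfolding b(2) Im_f1 by (simp add: algebra_simps)
    also have "\<dots> \<le> (lam/2) * GG2 lam" using hb lam by (intro mult_left_mono) auto
    finally have ix: "Im x \<le> (lam/2) * GG2 lam" .
    have "Im y = -((lam/2) * (-sqrt 3*Re a - Im a))" unfolding a(2) Im_f2 by (simp add: algebra_simps)
    moreover have "(lam/2) * (-sqrt 3*Re a - Im a) \<le> (lam/2) * GG2 lam" using ha lam by (intro mult_left_mono) auto
    ultimately have iy: "Im y \<ge> -((lam/2) * GG2 lam)" by linarith
    have d: "1 - lam \<noteq> 0" "lam \<noteq> 1" using lam by auto
    have e1: "- (lam * GG2 lam) = sqrt 3 * lam - sqrt 3 * lam^3 * iE lam"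
      using iEf(1)[OF lam] unfolding cdefs by algebra
    have e: "- (lam * GG2 lam) = sqrt 3 * lam - sqrt 3 * lam^3 / (1 - lam)"
      using e1 by (simp add: iE_def)
    have "Im y - Im x \<le> \<bar>Im (x - y)\<bar>" by simp
    also have "\<dots> \<le> dist x y" using abs_Im_le_cmod[of "x - y"] by (simp add: dist_norm)
    finally show "sqrt 3 * lam - sqrt 3 * lam^3 / (1 - lam) \<le> dist x y"
      using ix iy e by linarith
  qed
  show ?thesis using P1 P2 P3 by blast
qed

end
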